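(* Assume (L1) and (L2) hold. Then $\Phi(nT,0)$ is strongly positive for every integer $n>m$: for all $u_0\in[C(\bar\Omega)]^m$ with $u_0>0$ (i.e. $u_0\ge0$, $u_0\not\equiv0$) and all $n>m$, $\Phi(nT,0)u_0\gg0$ in $\bar\Omega$.
   Context: $\Omega\subset\mathbb R^N$ bounded with smooth boundary, $T>0$, $m\ge1$, $\mathbb S=\{1,\dots,m\}$, $Q_T=\bar\Omega\times(0,T]$; $u\gg0$ means all components positive. For each $i$, $d_i>0$, $J_i:\mathbb R^{2N}\to[0,\infty)$ continuous with $J_i(x,x)>0$, $\int_{\mathbb R^N}J_i(x,y)dy=1$. $\ell_{ik}\in C(\bar Q_T)$ are $T$-periodic in $t$ (extended periodically). (L1): $\ell_{ik}\ge0$ for $i\ne k$. (L2): the matrix of averages $\bar\ell_{ik}=\frac1{|\Omega|T}\int_0^T\int_\Omega\ell_{ik}\,dx\,dt$ is irreducible (no split of $\mathbb S$ into disjoint nonempty $I,K$ with $\bar\ell_{ik}=0$ for all $i\in I$, $k\in K$). $\Phi(t,s)v_0=v(\cdot,t)$ where $v$ solves $\partial_tv_i=d_i\int_\Omega J_i(x,y)v_i(y,t)dy+\sum_{k=1}^m\ell_{ik}(x,t)v_k$, $x\in\bar\Omega$, $t>s$, $v(\cdot,s)=v_0\in[C(\bar\Omega)]^m$. *)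

theory Defs
  imports "HOL-Analysis.Analysis"
begin

definition avg_coeff :: "(real^'n::finite) set \<Rightarrow> real \<Rightarrow> (real^'n \<Rightarrow> real \<Rightarrow> real) \<Rightarrow> real" where
  "avg_coeff \<Omega> T f =
     integral (\<Omega> \<times> {0..T}) (\<lambda>(x, t). f x t) / (measure lebesgue \<Omega> * T)"

definition irreducible_mat :: "nat \<Rightarrow> (nat \<Rightarrow> nat \<Rightarrow> real) \<Rightarrow> bool" where
  "irreducible_mat m A \<longleftrightarrow>
     \<not> (\<exists>I K. I \<noteq> {} \<and> K \<noteq> {} \<and> I \<inter> K = {} \<and> I \<union> K = {1..m} \<and>
            (\<forall>i\<in>I. \<forall>k\<in>K. A i k = 0))"

definition is_solution ::
  "(real^'n::finite) set \<Rightarrow> nat \<Rightarrow> (nat \<Rightarrow> real) \<Rightarrow> (nat \<Rightarrow> real^'n \<Rightarrow> real^'n \<Rightarrow> real)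
   \<Rightarrow> (nat \<Rightarrow> nat \<Rightarrow> real^'n \<Rightarrow> real \<Rightarrow> real) \<Rightarrow> real
   \<Rightarrow> (nat \<Rightarrow> real^'n \<Rightarrow> real) \<Rightarrow> (nat \<Rightarrow> real^'n \<Rightarrow> real \<Rightarrow> real) \<Rightarrow> bool" where
  "is_solution \<Omega> m d J l s v0 v \<longleftrightarrow>
     (\<forall>i\<in>{1..m}.
        continuous_on (closure \<Omega> \<times> {s..}) (\<lambda>(x, t). v i x t) \<and>
        (\<forall>x\<in>closure \<Omega>. v i x s = v0 i x) \<and>
        (\<forall>x\<in>closure \<Omega>. \<forall>t. t > s \<longrightarrow>
           ((\<lambda>\<tau>. v i x \<tau>) has_real_derivative
              (d i * integral \<Omega> (\<lambda>y. J i x y * v i y t)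
               + (\<Sum>k=1..m. l i k x t * v k x t))) (at t)))"

end

theory Submission
  imports Defs
begin


lemma int_cont:
  fixes f :: "real^'n \<Rightarrow> real"
  assumes "open \<Omega>" "bounded \<Omega>" "continuous_on (closure \<Omega>) f"
  shows "f integrable_on \<Omega>"
proof -
  have cc: "compact (closure \<Omega>)" using assms(2) by (simp add: compact_closure)
  then obtain B where B: "\<And>x. x \<in> closure \<Omega> \<Longrightarrow> norm (f x) \<le> B"
    using compact_continuous_image[OF assms(3) cc] compact_imp_bounded bounded_iff by (metis imageI)
  have lm: "\<Omega> \<in> lmeasurable" using lmeasurable_open assms by blast
  have "f absolutely_integrable_on \<Omega>"
  proof (rule measurable_bounded_by_integrable_imp_absolutely_integrable)
    show "f \<in> borel_measurable (lebesgue_on \<Omega>)"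
      using continuous_imp_measurable_on_sets_lebesgue[of \<Omega> f] assms lm
      by (meson closure_subset continuous_on_subset fmeasurableD)
    show "\<Omega> \<in> sets lebesgue" using lm by (simp add: fmeasurableD)
    show "(\<lambda>_. B) integrable_on \<Omega>" using integrable_on_const[OF lm] .
    show "\<And>x. x \<in> \<Omega> \<Longrightarrow> norm (f x) \<le> B" using B closure_subset by blast
  qed
  then show ?thesis by (simp add: absolutely_integrable_on_def)
qed

lemma int_pos:
  fixes f :: "real^'n \<Rightarrow> real"
  assumes "open \<Omega>" "bounded \<Omega>" "continuous_on (closure \<Omega>) f"
    and "\<And>y. y \<in> \<Omega> \<Longrightarrow> f y \<ge> 0" and "y0 \<in> \<Omega>" "f y0 > 0"
  shows "integral \<Omega> f > 0"
proof -
  have "continuous_on \<Omega> f" using assms(3) closure_subset continuous_on_subset by blast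
  then have "isCont f y0" using assms(1,5) continuous_on_eq_continuous_at by blast
  then obtain e1 where e1: "e1 > 0" "\<And>y. dist y y0 < e1 \<Longrightarrow> dist (f y) (f y0) < f y0 / 2"
    using assms(6) unfolding continuous_at_eps_delta by (metis half_gt_zero)
  obtain e2 where e2: "e2 > 0" "ball y0 e2 \<subseteq> \<Omega>" using assms(1,5) open_contains_ball by blast
  define e where "e = min e1 e2"
  have e: "e > 0" "ball y0 e \<subseteq> \<Omega>" using e1 e2 by (auto simp: e_def)
  have fb: "\<And>y. y \<in> ball y0 e \<Longrightarrow> f y \<ge> f y0 / 2"
  proof -
    fix y assume "y \<in> ball y0 e"
    then have "dist y y0 < e1" by (auto simp: e_def dist_commute)
    then have "dist (f y) (f y0) < f y0 / 2" using e1 by blast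
    then show "f y \<ge> f y0 / 2" unfolding dist_real_def by linarith
  qed
  have ib: "f integrable_on ball y0 e"
    by (rule int_cont) (use continuous_on_subset[OF assms(3)] closure_mono[OF e(2)] in auto)
  have iO: "f integrable_on \<Omega>" using int_cont assms(1-3) by blast
  have lmb: "ball y0 e \<in> lmeasurable" by simp
  have "0 < f y0 / 2 * measure lebesgue (ball y0 e)"
    using assms(6) e content_ball_pos[of e y0] by (simp add: measure_completion)
  also have "\<dots> = integral (ball y0 e) (\<lambda>_. f y0 / 2)"
    using lmeasure_integral[OF lmb] integral_mult_right[of "ball y0 e" "f y0 / 2" "\<lambda>_. 1"] by simp
  also have "\<dots> \<le> integral (ball y0 e) f"
    by (rule integral_le) (use ib fb integrable_on_const[OF lmb] in auto)
  also have "\<dots> \<le> integral \<Omega> f"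
    by (rule integral_subset_le) (use e ib iO assms(4) in auto)
  finally show ?thesis .
qed



lemma finite_bound:
  fixes F :: "'a \<Rightarrow> real set"
  assumes "finite A" "\<And>a. a \<in> A \<Longrightarrow> \<exists>B. \<forall>y\<in>F a. y \<le> B"
  shows "\<exists>B. \<forall>a\<in>A. \<forall>y\<in>F a. y \<le> B"
  using assms
proof (induction A rule: finite_induct)
  case empty then show ?case by auto
next
  case (insert a A)
  then obtain B1 where B1: "\<forall>b\<in>A. \<forall>y\<in>F b. y \<le> B1" by blast
  obtain B2 where B2: "\<forall>y\<in>F a. y \<le> B2" using insert by blast
  show ?case
    by (rule exI[of _ "max B1 B2"]) (use B1 B2 in fastforce)
qed

locale psys =
  fixes \<Omega> :: "(real^'n) set"
    and m :: nat and T :: real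
    and d :: "nat \<Rightarrow> real"
    and J :: "nat \<Rightarrow> real^'n \<Rightarrow> real^'n \<Rightarrow> real"
    and l :: "nat \<Rightarrow> nat \<Rightarrow> real^'n \<Rightarrow> real \<Rightarrow> real"
    and u0 :: "nat \<Rightarrow> real^'n \<Rightarrow> real"
    and v :: "nat \<Rightarrow> real^'n \<Rightarrow> real \<Rightarrow> real"
  assumes \<Omega>_open: "open \<Omega>" and \<Omega>_conn: "connected \<Omega>" and \<Omega>_ne: "\<Omega> \<noteq> {}"
    and \<Omega>_bdd: "bounded \<Omega>"
    and T_pos: "T > 0" and m_pos: "m \<ge> 1"
    and d_pos: "\<And>i. i \<in> {1..m} \<Longrightarrow> d i > 0"
    and J_cont: "\<And>i. i \<in> {1..m} \<Longrightarrow> continuous_on UNIV (\<lambda>(x, y). J i x y)"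
    and J_nonneg: "\<And>i x y. i \<in> {1..m} \<Longrightarrow> J i x y \<ge> 0"
    and J_diag: "\<And>i x. i \<in> {1..m} \<Longrightarrow> J i x x > 0"
    and J_int: "\<And>i x. i \<in> {1..m} \<Longrightarrow> (J i x has_integral 1) UNIV"
    and l_cont: "\<And>i k. i \<in> {1..m} \<Longrightarrow> k \<in> {1..m} \<Longrightarrow>
                   continuous_on (closure \<Omega> \<times> UNIV) (\<lambda>(x, t). l i k x t)"
    and l_per: "\<And>i k x t. i \<in> {1..m} \<Longrightarrow> k \<in> {1..m} \<Longrightarrow> x \<in> closure \<Omega> \<Longrightarrow>
                   l i k x (t + T) = l i k x t"
    and L1: "\<And>i k x t. i \<in> {1..m} \<Longrightarrow> k \<in> {1..m} \<Longrightarrow> i \<noteq> k \<Longrightarrow>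
                   x \<in> closure \<Omega> \<Longrightarrow> l i k x t \<ge> 0"
    and L2: "irreducible_mat m (\<lambda>i k. avg_coeff \<Omega> T (l i k))"
    and u0_cont: "\<And>i. i \<in> {1..m} \<Longrightarrow> continuous_on (closure \<Omega>) (u0 i)"
    and u0_nonneg: "\<And>i x. i \<in> {1..m} \<Longrightarrow> x \<in> closure \<Omega> \<Longrightarrow> u0 i x \<ge> 0"
    and u0_nz: "\<exists>i\<in>{1..m}. \<exists>x\<in>closure \<Omega>. u0 i x \<noteq> 0"
    and sol: "is_solution \<Omega> m d J l 0 u0 v"
begin

lemma v_cont: "i \<in> {1..m} \<Longrightarrow> continuous_on (closure \<Omega> \<times> {0..}) (\<lambda>(x, t). v i x t)"
  using sol by (simp add: is_solution_def)

lemma v_init: "i \<in> {1..m} \<Longrightarrow> x \<in> closure \<Omega> \<Longrightarrow> v i x 0 = u0 i x"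
  using sol by (simp add: is_solution_def)

lemma v_deriv: "i \<in> {1..m} \<Longrightarrow> x \<in> closure \<Omega> \<Longrightarrow> t > 0 \<Longrightarrow>
   ((\<lambda>\<tau>. v i x \<tau>) has_real_derivative
       (d i * integral \<Omega> (\<lambda>y. J i x y * v i y t) + (\<Sum>k=1..m. l i k x t * v k x t))) (at t)"
  using sol by (simp add: is_solution_def)

lemma v_cont_t: assumes "i \<in> {1..m}" "x \<in> closure \<Omega>"
  shows "continuous_on {0..} (\<lambda>t. v i x t)"
proof -
  have "continuous_on {0..} (\<lambda>t. (\<lambda>(x, t). v i x t) (x, t))"
    by (rule continuous_on_compose2[OF v_cont[OF assms(1)]]) (use assms in \<open>auto intro!: continuous_intros\<close>)
  then show ?thesis by simp
qed

lemma v_cont_x: assumes "i \<in> {1..m}" "t \<ge> 0"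
  shows "continuous_on (closure \<Omega>) (\<lambda>y. v i y t)"
proof -
  have "continuous_on (closure \<Omega>) (\<lambda>y. (\<lambda>(x, t). v i x t) (y, t))"
    by (rule continuous_on_compose2[OF v_cont[OF assms(1)]]) (use assms in \<open>auto intro!: continuous_intros\<close>)
  then show ?thesis by simp
qed

lemma J_cont_y: assumes "i \<in> {1..m}" shows "continuous_on UNIV (\<lambda>y. J i x y)"
proof -
  have "continuous_on UNIV (\<lambda>y. (\<lambda>(x, y). J i x y) (x, y))"
    by (rule continuous_on_compose2[OF J_cont[OF assms(1)]]) (auto intro!: continuous_intros)
  then show ?thesis by simp
qed

lemma J_cont_x: assumes "i \<in> {1..m}" shows "continuous_on UNIV (\<lambda>x. J i x y)"
proof -
  have "continuous_on UNIV (\<lambda>x. (\<lambda>(x, y). J i x y) (x, y))"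
    by (rule continuous_on_compose2[OF J_cont[OF assms(1)]]) (auto intro!: continuous_intros)
  then show ?thesis by simp
qed

lemma integ: assumes "i \<in> {1..m}" "t \<ge> 0"
  shows "(\<lambda>y. J i x y * v i y t) integrable_on \<Omega>"
  by (rule int_cont[OF \<Omega>_open \<Omega>_bdd])
     (intro continuous_intros continuous_on_subset[OF J_cont_y[OF assms(1)]] v_cont_x[OF assms]; simp)

lemma J_le1: assumes "i \<in> {1..m}" shows "integral \<Omega> (J i x) \<le> 1"
proof -
  have "J i x integrable_on \<Omega>"
    by (rule int_cont[OF \<Omega>_open \<Omega>_bdd]) (rule continuous_on_subset[OF J_cont_y[OF assms]], simp)
  moreover have "J i x integrable_on UNIV" using J_int[OF assms] by blast
  ultimately have "integral \<Omega> (J i x) \<le> integral UNIV (J i x)"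
    by (intro integral_subset_le) (auto simp: J_nonneg[OF assms])
  also have "\<dots> = 1" using J_int[OF assms] by blast
  finally show ?thesis .
qed

lemma l_bound: "\<exists>L\<ge>0. \<forall>i\<in>{1..m}. \<forall>k\<in>{1..m}. \<forall>x\<in>closure \<Omega>. \<forall>t\<in>{0..Te}. \<bar>l i k x t\<bar> \<le> L"
proof -
  have "\<exists>B. \<forall>a\<in>{1..m} \<times> {1..m}. \<forall>y\<in>(\<lambda>(x, t). \<bar>l (fst a) (snd a) x t\<bar>) ` (closure \<Omega> \<times> {0..Te}). y \<le> B"
  proof (rule finite_bound)
    fix a assume a: "a \<in> {1..m} \<times> {1..m}"
    have cpt: "compact (closure \<Omega> \<times> {0..Te})"
      using \<Omega>_bdd by (simp add: compact_Times compact_closure)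
    have "continuous_on (closure \<Omega> \<times> {0..Te}) (\<lambda>(x, t). l (fst a) (snd a) x t)"
      by (rule continuous_on_subset[OF l_cont]) (use a in auto)
    then have "continuous_on (closure \<Omega> \<times> {0..Te}) (\<lambda>p. \<bar>(\<lambda>(x, t). l (fst a) (snd a) x t) p\<bar>)"
      by (intro continuous_intros)
    then have "compact ((\<lambda>p. \<bar>(\<lambda>(x, t). l (fst a) (snd a) x t) p\<bar>) ` (closure \<Omega> \<times> {0..Te}))"
      using cpt compact_continuous_image by blast
    then obtain B where "\<forall>y\<in>(\<lambda>p. \<bar>(\<lambda>(x, t). l (fst a) (snd a) x t) p\<bar>) ` (closure \<Omega> \<times> {0..Te}). norm y \<le> B"
      using compact_imp_bounded bounded_iff by metis
    then show "\<exists>B. \<forall>y\<in>(\<lambda>(x, t). \<bar>l (fst a) (snd a) x t\<bar>) ` (closure \<Omega> \<times> {0..Te}). y \<le> B"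
      by (intro exI[of _ B]) (auto simp: split_beta)
  qed simp
  then obtain B where B: "\<forall>a\<in>{1..m} \<times> {1..m}. \<forall>y\<in>(\<lambda>(x, t). \<bar>l (fst a) (snd a) x t\<bar>) ` (closure \<Omega> \<times> {0..Te}). y \<le> B"
    by blast
  show ?thesis
  proof (intro exI[of _ "max B 0"] conjI ballI)
    fix i k x t assume "i \<in> {1..m}" "k \<in> {1..m}" "x \<in> closure \<Omega>" "t \<in> {0..Te}"
    then have "\<bar>l i k x t\<bar> \<le> B" using B by fastforce
    then show "\<bar>l i k x t\<bar> \<le> max B 0" by simp
  qed simp
qed

end


context psys
begin

lemma z_pos:
  assumes Te: "Te \<ge> 0" and L: "L \<ge> 0"
    and Lb: "\<forall>i\<in>{1..m}. \<forall>k\<in>{1..m}. \<forall>x\<in>closure \<Omega>. \<forall>t\<in>{0..Te}. \<bar>l i k x t\<bar> \<le> L"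
    and eps: "\<epsilon> > 0"
  shows "\<forall>i\<in>{1..m}. \<forall>x\<in>closure \<Omega>. \<forall>t\<in>{0..Te}.
            v i x t + \<epsilon> * exp ((real m * L + (\<Sum>i=1..m. d i) + 1) * t) > 0"
proof (rule ccontr)
  define K where "K = real m * L + (\<Sum>i=1..m. d i) + 1"
  define z where "z i x t = v i x t + \<epsilon> * exp (K * t)" for i x t
  define C where "C = closure \<Omega> \<times> {0..Te}"
  define Bad where "Bad = (\<Union>i\<in>{1..m}. snd ` {p \<in> C. z i (fst p) (snd p) \<le> 0})"
  assume "\<not> ?thesis"
  then obtain i0 x0 t0 where "i0 \<in> {1..m}" "x0 \<in> closure \<Omega>" "t0 \<in> {0..Te}" "z i0 x0 t0 \<le> 0"
    by (auto simp: z_def K_def not_less)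
  then have "t0 \<in> Bad" unfolding Bad_def C_def by (force intro!: image_eqI[of _ snd "(x0, t0)"])
  then have Bne: "Bad \<noteq> {}" by blast
  have cC: "compact C" unfolding C_def using \<Omega>_bdd by (simp add: compact_Times compact_closure)
  have "compact Bad" unfolding Bad_def
  proof (intro compact_UN ballI finite_atLeastAtMost)
    fix i assume i: "i \<in> {1..m}"
    have gc: "continuous_on C (\<lambda>p. z i (fst p) (snd p))"
      unfolding z_def
    proof (intro continuous_intros)
      have sub: "C \<subseteq> closure \<Omega> \<times> {0..}" by (auto simp: C_def)
      show "continuous_on C (\<lambda>p. v i (fst p) (snd p))"
        using continuous_on_subset[OF v_cont[OF i] sub] by (simp add: split_beta)
    qed
    have "closed {p \<in> C. z i (fst p) (snd p) \<le> 0}"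
      by (rule continuous_on_closed_Collect_le[OF gc continuous_on_const]) (use cC compact_imp_closed in auto)
    then have "compact {p \<in> C. z i (fst p) (snd p) \<le> 0}"
      using cC by (metis (no_types, lifting) compact_Int_closed inf.absorb_iff2 mem_Collect_eq subsetI)
    then show "compact (snd ` {p \<in> C. z i (fst p) (snd p) \<le> 0})"
      by (intro compact_continuous_image continuous_intros)
  qed
  then obtain ts where ts: "ts \<in> Bad" "\<And>t. t \<in> Bad \<Longrightarrow> ts \<le> t"
    using compact_attains_inf[OF _ Bne] by blast
  then obtain i x where i: "i \<in> {1..m}" and x: "x \<in> closure \<Omega>" and tsI: "ts \<in> {0..Te}"
    and zi: "z i x ts \<le> 0"
    unfolding Bad_def C_def by auto
  have before: "z k y t > 0" if "k \<in> {1..m}" "y \<in> closure \<Omega>" "t \<in> {0..Te}" "t < ts" for k y t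
  proof (rule ccontr)
    assume "\<not> z k y t > 0"
    then have "t \<in> Bad" unfolding Bad_def C_def using that
      by (force intro!: image_eqI[of _ snd "(y, t)"])
    then show False using ts(2) that(4) by force
  qed
  have ts_pos: "ts > 0"
  proof (rule ccontr)
    assume "\<not> ts > 0"
    then have "ts = 0" using tsI by auto
    then have "z i x ts = u0 i x + \<epsilon>" by (simp add: z_def v_init[OF i x])
    then show False using zi u0_nonneg[OF i x] eps by auto
  qed
  have zge: "z k y ts \<ge> 0" if k: "k \<in> {1..m}" and y: "y \<in> closure \<Omega>" for k y
  proof -
    have "isCont (\<lambda>t. v k y t) ts"
      using continuous_on_interior[OF v_cont_t[OF k y], of ts] ts_pos by simp
    then have "isCont (\<lambda>t. z k y t) ts" unfolding z_def by (intro continuous_intros)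
    then have lim: "((\<lambda>t. z k y t) \<longlongrightarrow> z k y ts) (at_left ts)"
      unfolding isCont_def by (rule tendsto_within_subset) auto
    have "eventually (\<lambda>t. t \<in> {0<..<ts}) (at_left ts)"
      using eventually_at_left_real[OF ts_pos] .
    then have "eventually (\<lambda>t. 0 \<le> z k y t) (at_left ts)"
    proof (rule eventually_mono)
      fix t assume "t \<in> {0<..<ts}"
      then show "0 \<le> z k y t" using before[OF k y, of t] tsI by auto
    qed
    then show ?thesis using tendsto_lowerbound[OF lim] by auto
  qed
  define E where "E = exp (K * ts)"
  have E: "E > 0" by (simp add: E_def)
  have zi0: "z i x ts = 0" using zi zge[OF i x] by auto
  have vi: "v i x ts = - (\<epsilon> * E)" using zi0 by (simp add: z_def E_def)
  have vk: "v k y ts \<ge> - (\<epsilon> * E)" if "k \<in> {1..m}" "y \<in> closure \<Omega>" for k y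
    using zge[OF that] by (simp add: z_def E_def)
  define Dv where "Dv = d i * integral \<Omega> (\<lambda>y. J i x y * v i y ts) + (\<Sum>k=1..m. l i k x ts * v k x ts)"
  have dv: "((\<lambda>\<tau>. v i x \<tau>) has_real_derivative Dv) (at ts)"
    unfolding Dv_def by (rule v_deriv[OF i x ts_pos])
  have de: "((\<lambda>\<tau>. \<epsilon> * exp (K * \<tau>)) has_real_derivative \<epsilon> * (exp (K * ts) * K)) (at ts)"
    by (auto intro!: derivative_eq_intros)
  have dz: "((\<lambda>\<tau>. z i x \<tau>) has_real_derivative Dv + \<epsilon> * (exp (K * ts) * K)) (at ts)"
    unfolding z_def by (rule DERIV_add[OF dv de])
  have I: "integral \<Omega> (\<lambda>y. J i x y * v i y ts) \<ge> - (\<epsilon> * E)"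
  proof -
    have "integral \<Omega> (\<lambda>y. J i x y * v i y ts) \<ge> integral \<Omega> (\<lambda>y. (- (\<epsilon> * E)) * J i x y)"
    proof (rule integral_le)
      show "(\<lambda>y. J i x y * v i y ts) integrable_on \<Omega>" using integ[OF i] ts_pos by simp
      have "J i x integrable_on \<Omega>"
        by (rule int_cont[OF \<Omega>_open \<Omega>_bdd]) (rule continuous_on_subset[OF J_cont_y[OF i]], simp)
      then show "(\<lambda>y. (- (\<epsilon> * E)) * J i x y) integrable_on \<Omega>"
        using integrable_cmul[of "J i x" \<Omega> "- (\<epsilon> * E)"] by simp
      fix y assume "y \<in> \<Omega>"
      then have "v i y ts \<ge> - (\<epsilon> * E)" using vk[OF i] closure_subset by blast
      then show "(- (\<epsilon> * E)) * J i x y \<le> J i x y * v i y ts"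
        using mult_left_mono[OF _ J_nonneg[OF i, of x y]] by (metis mult.commute mult_minus_right)
    qed
    also have "integral \<Omega> (\<lambda>y. (- (\<epsilon> * E)) * J i x y) = (- (\<epsilon> * E)) * integral \<Omega> (J i x)"
      by simp
    also have "\<dots> \<ge> - (\<epsilon> * E)"
      using J_le1[OF i, of x] eps E by (simp add: mult_left_le)
    finally show ?thesis by linarith
  qed
  have dsum: "d i \<le> (\<Sum>i=1..m. d i)"
    using i d_pos by (intro member_le_sum) (auto simp: less_imp_le)
  have part1: "d i * integral \<Omega> (\<lambda>y. J i x y * v i y ts) \<ge> - ((\<Sum>i=1..m. d i) * (\<epsilon> * E))"
  proof -
    have "d i * integral \<Omega> (\<lambda>y. J i x y * v i y ts) \<ge> d i * (- (\<epsilon> * E))"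
      using mult_left_mono[OF I less_imp_le[OF d_pos[OF i]]] .
    moreover have "d i * (\<epsilon> * E) \<le> (\<Sum>i=1..m. d i) * (\<epsilon> * E)"
      using dsum eps E by (simp add: mult_right_mono)
    ultimately show ?thesis by simp
  qed
  have tsTe: "ts \<in> {0..Te}" using tsI .
  have termb: "l i k x ts * v k x ts \<ge> - (L * (\<epsilon> * E))" if k: "k \<in> {1..m}" for k
  proof -
    have lL: "l i k x ts \<le> L" using Lb i k x tsTe by fastforce
    have "l i k x ts * v k x ts \<ge> l i k x ts * (- (\<epsilon> * E))"
    proof (cases "k = i")
      case True then show ?thesis using vi by simp
    next
      case False
      then show ?thesis using mult_left_mono[OF vk[OF k x] L1[OF i k _ x, of ts]] by simp
    qed
    moreover have "l i k x ts * (\<epsilon> * E) \<le> L * (\<epsilon> * E)"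
      using lL eps E by (simp add: mult_right_mono)
    ultimately show ?thesis by simp
  qed
  have part2: "(\<Sum>k=1..m. l i k x ts * v k x ts) \<ge> - (real m * (L * (\<epsilon> * E)))"
  proof -
    have "(\<Sum>k=1..m. l i k x ts * v k x ts) \<ge> (\<Sum>k=1..m. - (L * (\<epsilon> * E)))"
      by (rule sum_mono) (use termb in auto)
    then show ?thesis by simp
  qed
  have "Dv + \<epsilon> * (exp (K * ts) * K) \<ge> \<epsilon> * E * (K - (\<Sum>i=1..m. d i) - real m * L)"
    using part1 part2 unfolding Dv_def E_def[symmetric] by (simp add: algebra_simps)
  also have "\<epsilon> * E * (K - (\<Sum>i=1..m. d i) - real m * L) = \<epsilon> * E"
    by (simp add: K_def)
  finally have Dpos: "Dv + \<epsilon> * (exp (K * ts) * K) > 0" using mult_pos_pos[OF eps E] by linarith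
  obtain \<delta> where \<delta>: "\<delta> > 0" "\<And>h. h > 0 \<Longrightarrow> h < \<delta> \<Longrightarrow> z i x (ts - h) < z i x ts"
    using DERIV_pos_inc_left[OF dz Dpos] by blast
  define h where "h = min (\<delta> / 2) (ts / 2)"
  have h: "h > 0" "h < \<delta>" "h \<le> ts / 2" using \<delta> ts_pos by (auto simp: h_def)
  have "z i x (ts - h) < 0" using \<delta>(2)[OF h(1,2)] zi0 by simp
  moreover have "z i x (ts - h) > 0"
    by (rule before[OF i x]) (use h tsI in auto)
  ultimately show False by simp
qed

lemma v_nonneg:
  assumes i: "i \<in> {1..m}" and x: "x \<in> closure \<Omega>" and t: "t \<ge> 0"
  shows "v i x t \<ge> 0"
proof (rule ccontr)
  assume neg: "\<not> v i x t \<ge> 0"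
  obtain L where L: "L \<ge> 0" "\<forall>i\<in>{1..m}. \<forall>k\<in>{1..m}. \<forall>x\<in>closure \<Omega>. \<forall>s\<in>{0..t}. \<bar>l i k x s\<bar> \<le> L"
    using l_bound by blast
  define K where "K = real m * L + (\<Sum>i=1..m. d i) + 1"
  define \<epsilon> where "\<epsilon> = - v i x t / (2 * exp (K * t))"
  have eps: "\<epsilon> > 0" unfolding \<epsilon>_def by (rule divide_pos_pos) (use neg in auto)
  have "v i x t + \<epsilon> * exp (K * t) > 0"
    using z_pos[OF t L eps] i x t by (simp add: K_def)
  moreover have "\<epsilon> * exp (K * t) = - v i x t / 2" by (simp add: \<epsilon>_def)
  ultimately show False using neg by simp
qed

end


context psys
begin

definition F where
  "F i x r = d i * integral \<Omega> (\<lambda>y. J i x y * v i y r) + (\<Sum>k\<in>{1..m}-{i}. l i k x r * v k x r)"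

lemma I_nonneg: assumes i: "i \<in> {1..m}" and r: "r \<ge> 0"
  shows "integral \<Omega> (\<lambda>y. J i x y * v i y r) \<ge> 0"
proof (rule integral_nonneg[OF integ[OF i r]])
  fix y assume "y \<in> \<Omega>"
  then have "y \<in> closure \<Omega>" using closure_subset by blast
  then show "0 \<le> J i x y * v i y r" using J_nonneg[OF i] v_nonneg[OF i _ r] by simp
qed

lemma sum_nonneg_F: assumes i: "i \<in> {1..m}" and x: "x \<in> closure \<Omega>" and r: "r \<ge> 0"
  shows "(\<Sum>k\<in>{1..m}-{i}. l i k x r * v k x r) \<ge> 0"
  by (rule sum_nonneg) (use L1[OF i _ _ x] v_nonneg[OF _ x r] in auto)

lemma F_nonneg: assumes i: "i \<in> {1..m}" and x: "x \<in> closure \<Omega>" and r: "r \<ge> 0"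
  shows "F i x r \<ge> 0"
  unfolding F_def using I_nonneg[OF i r, of x] sum_nonneg_F[OF i x r] d_pos[OF i]
  by simp

lemma key:
  assumes i: "i \<in> {1..m}" and x: "x \<in> closure \<Omega>" and a: "0 \<le> a" "a \<le> b"
    and hyp: "v i x a > 0 \<or> (\<exists>r. a < r \<and> r < b \<and> F i x r > 0)"
  shows "v i x b > 0"
proof -
  obtain L where L: "L \<ge> 0" "\<forall>i\<in>{1..m}. \<forall>k\<in>{1..m}. \<forall>x\<in>closure \<Omega>. \<forall>s\<in>{0..b}. \<bar>l i k x s\<bar> \<le> L"
    using l_bound by blast
  define h where "h t = exp (L * t) * v i x t" for t
  define H where "H r = exp (L * r) * ((L + l i i x r) * v i x r + F i x r)" for r
  have hder: "(h has_real_derivative H r) (at r)" if r: "a < r" "r < b" for r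
  proof -
    have r0: "r > 0" using r a by auto
    have e: "((\<lambda>t. exp (L * t)) has_real_derivative exp (L * r) * L) (at r)"
      by (auto intro!: derivative_eq_intros)
    have s: "(\<Sum>k=1..m. l i k x r * v k x r) = l i i x r * v i x r + (\<Sum>k\<in>{1..m}-{i}. l i k x r * v k x r)"
      using i by (simp add: sum.remove)
    have "(h has_real_derivative exp (L * r) *
        (d i * integral \<Omega> (\<lambda>y. J i x y * v i y r) + (\<Sum>k=1..m. l i k x r * v k x r)) + exp (L * r) * L * v i x r) (at r)"
      unfolding h_def by (rule DERIV_mult'[OF e v_deriv[OF i x r0]])
    moreover have "exp (L * r) *
        (d i * integral \<Omega> (\<lambda>y. J i x y * v i y r) + (\<Sum>k=1..m. l i k x r * v k x r)) + exp (L * r) * L * v i x r = H r"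
      unfolding H_def F_def s by (simp add: algebra_simps)
    ultimately show ?thesis by simp
  qed
  have Hge: "H r \<ge> exp (L * r) * F i x r" if r: "a < r" "r < b" for r
  proof -
    have "\<bar>l i i x r\<bar> \<le> L" using L(2) i x r a by auto
    then have "(L + l i i x r) * v i x r \<ge> 0"
      using v_nonneg[OF i x, of r] r a by (intro mult_nonneg_nonneg) auto
    then show ?thesis unfolding H_def by (simp add: mult_left_mono)
  qed
  have Hnn: "H r \<ge> 0" if r: "a < r" "r < b" for r
    using Hge[OF r] F_nonneg[OF i x, of r] r a by (smt (verit) exp_gt_zero mult_nonneg_nonneg)
  have mono: "h p \<le> h q" if pq: "a \<le> p" "p \<le> q" "q \<le> b" for p q
  proof (rule DERIV_nonneg_imp_increasing_open[OF pq(2)])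
    fix t assume "p < t" "t < q"
    then show "\<exists>y. (h has_real_derivative y) (at t) \<and> y \<ge> 0"
      using hder Hnn pq by (meson less_le_trans le_less_trans)
  next
    have "continuous_on {p..q} (\<lambda>t. v i x t)"
      by (rule continuous_on_subset[OF v_cont_t[OF i x]]) (use pq a in auto)
    then show "continuous_on {p..q} h" unfolding h_def by (intro continuous_intros)
  qed
  have ha: "h a \<ge> 0" unfolding h_def using v_nonneg[OF i x a(1)] by simp
  have "h b > 0"
    using hyp
  proof
    assume "v i x a > 0"
    then have "h a > 0" unfolding h_def by simp
    then show ?thesis using mono[of a b] a by auto
  next
    assume "\<exists>r. a < r \<and> r < b \<and> F i x r > 0"
    then obtain r where r: "a < r" "r < b" "F i x r > 0" by blast
    have "H r > 0" using Hge[OF r(1,2)] r(3) by (smt (verit) exp_gt_zero mult_pos_pos)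
    then obtain \<delta> where \<delta>: "\<delta> > 0" "\<And>e. e > 0 \<Longrightarrow> e < \<delta> \<Longrightarrow> h r < h (r + e)"
      using DERIV_pos_inc_right[OF hder[OF r(1,2)]] by blast
    define e where "e = min (\<delta> / 2) ((b - r) / 2)"
    have e1: "e \<le> \<delta> / 2" unfolding e_def by (rule min.cobounded1)
    have e2: "e \<le> (b - r) / 2" unfolding e_def by (rule min.cobounded2)
    have e3: "e > 0" unfolding e_def using \<delta>(1) r(2) by simp
    note e0 = e3 e1 e2
    have e4: "e < \<delta>" using e0 \<delta>(1) by (simp add: field_simps)
    have e5: "r + e \<le> b" using e0 r(2) by (simp add: field_simps)
    note e = e3 e4 e5
    have "h r < h (r + e)" using \<delta>(2)[OF e(1,2)] .
    moreover have "h a \<le> h r" using mono[of a r] r by auto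
    moreover have "h (r + e) \<le> h b" using mono[of "r + e" b] r e by auto
    ultimately show ?thesis using ha by linarith
  qed
  then show ?thesis unfolding h_def by (simp add: zero_less_mult_iff)
qed

lemma spread:
  assumes i: "i \<in> {1..m}" and x: "x \<in> closure \<Omega>" and y: "y \<in> \<Omega>"
    and Jp: "J i x y > 0" and vp: "v i y r > 0" and r: "0 < r" "r < t"
  shows "v i x t > 0"
proof (rule key[OF i x, of 0])
  have "integral \<Omega> (\<lambda>y. J i x y * v i y r) > 0"
  proof (rule int_pos[OF \<Omega>_open \<Omega>_bdd])
    show "continuous_on (closure \<Omega>) (\<lambda>y. J i x y * v i y r)"
      by (intro continuous_intros continuous_on_subset[OF J_cont_y[OF i]] v_cont_x[OF i]) (use r in auto)
    show "\<And>y. y \<in> \<Omega> \<Longrightarrow> 0 \<le> J i x y * v i y r"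
      using J_nonneg[OF i] v_nonneg[OF i _, of _ r] r closure_subset by (meson in_mono less_imp_le mult_nonneg_nonneg)
  qed (use y Jp vp in auto)
  then have "F i x r > 0"
    unfolding F_def using sum_nonneg_F[OF i x, of r] d_pos[OF i] r
    by (smt (verit) mult_pos_pos)
  then show "v i x 0 > 0 \<or> (\<exists>r'. 0 < r' \<and> r' < t \<and> F i x r' > 0)" using r by blast
qed (use r in auto)

lemma couple:
  assumes i: "i \<in> {1..m}" and k: "k \<in> {1..m}" "k \<noteq> i" and x: "x \<in> closure \<Omega>"
    and lp: "l i k x r > 0" and vp: "v k x r > 0" and r: "0 < r" "r < t"
  shows "v i x t > 0"
proof (rule key[OF i x, of 0])
  have "(\<Sum>k\<in>{1..m}-{i}. l i k x r * v k x r) > 0"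
    by (rule sum_pos2[of _ k]) (use k lp vp L1[OF i _ _ x] v_nonneg[OF _ x, of _ r] r in auto)
  then have "F i x r > 0"
    unfolding F_def using I_nonneg[OF i, of r x] d_pos[OF i] r
    by (smt (verit) mult_nonneg_nonneg)
  then show "v i x 0 > 0 \<or> (\<exists>r'. 0 < r' \<and> r' < t \<and> F i x r' > 0)" using r by blast
qed (use r in auto)

lemma persist:
  assumes i: "i \<in> {1..m}" and x: "x \<in> closure \<Omega>" and "0 \<le> a" "a \<le> b" "v i x a > 0"
  shows "v i x b > 0"
  using key[OF i x] assms by blast

end


context psys
begin

lemma J_pos_near_y: assumes i: "i \<in> {1..m}"
  shows "\<exists>e>0. \<forall>y. dist y w < e \<longrightarrow> J i w y > 0"
proof -
  have "isCont (\<lambda>y. J i w y) w" using J_cont_y[OF i] by (simp add: continuous_on_eq_continuous_at)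
  then obtain e where e: "e > 0" "\<And>y. dist y w < e \<Longrightarrow> dist (J i w y) (J i w w) < J i w w"
    using J_diag[OF i, of w] unfolding continuous_at_eps_delta by blast
  show ?thesis
  proof (intro exI[of _ e] conjI allI impI)
    fix y assume "dist y w < e"
    then have "dist (J i w y) (J i w w) < J i w w" using e by blast
    then show "J i w y > 0" by (simp add: dist_real_def abs_less_iff)
  qed (use e in auto)
qed

lemma J_pos_near_x: assumes i: "i \<in> {1..m}"
  shows "\<exists>e>0. \<forall>x. dist x w < e \<longrightarrow> J i x w > 0"
proof -
  have "isCont (\<lambda>x. J i x w) w" using J_cont_x[OF i] by (simp add: continuous_on_eq_continuous_at)
  then obtain e where e: "e > 0" "\<And>x. dist x w < e \<Longrightarrow> dist (J i x w) (J i w w) < J i w w"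
    using J_diag[OF i, of w] unfolding continuous_at_eps_delta by blast
  show ?thesis
  proof (intro exI[of _ e] conjI allI impI)
    fix x assume "dist x w < e"
    then have "dist (J i x w) (J i w w) < J i w w" using e by blast
    then show "J i x w > 0" by (simp add: dist_real_def abs_less_iff)
  qed (use e in auto)
qed

lemma fill:
  assumes i: "i \<in> {1..m}" and y: "y \<in> closure \<Omega>" and r: "r \<ge> 0" and vp: "v i y r > 0"
    and t: "t > r" and x: "x \<in> closure \<Omega>"
  shows "v i x t > 0"
proof -
  obtain y' where y': "y' \<in> \<Omega>" "v i y' r > 0"
  proof -
    obtain d where d: "d > 0" "\<And>x'. x' \<in> closure \<Omega> \<Longrightarrow> dist x' y < d \<Longrightarrow> dist (v i x' r) (v i y r) < v i y r"
      using v_cont_x[OF i r] y vp unfolding continuous_on_iff by blast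
    obtain y' where "y' \<in> \<Omega>" "dist y' y < d" using y d(1) closure_approachable by blast
    moreover then have "dist (v i y' r) (v i y r) < v i y r" using d(2) closure_subset by blast
    ultimately show ?thesis using that by (simp add: dist_real_def abs_less_iff)
  qed
  define W where "W = {w \<in> \<Omega>. \<forall>s>r. v i w s > 0}"
  have y'W: "y' \<in> W" unfolding W_def
    using y' persist[OF i _ r] closure_subset by (auto intro: less_imp_le)
  have clos: "\<forall>s>r. v i w s > 0" if w: "w \<in> closure \<Omega>" "w \<in> closure W" for w
  proof (intro allI impI)
    fix s assume s: "s > r"
    obtain e where e: "e > 0" "\<And>y. dist y w < e \<Longrightarrow> J i w y > 0" using J_pos_near_y[OF i] by blast
    obtain u where u: "u \<in> W" "dist u w < e" using w(2) e(1) closure_approachable by blast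
    have "u \<in> \<Omega>" "v i u ((r + s) / 2) > 0" using u s unfolding W_def by auto
    then show "v i w s > 0"
      using spread[OF i w(1) _ e(2)[OF u(2)], of "(r + s) / 2"] r s by (simp add: field_simps)
  qed
  have Wopen: "open W"
    unfolding open_contains_ball
  proof
    fix w assume w: "w \<in> W"
    then have wO: "w \<in> \<Omega>" by (simp add: W_def)
    obtain e1 where e1: "e1 > 0" "\<And>x. dist x w < e1 \<Longrightarrow> J i x w > 0" using J_pos_near_x[OF i] by blast
    obtain e2 where e2: "e2 > 0" "ball w e2 \<subseteq> \<Omega>" using \<Omega>_open wO open_contains_ball by blast
    have "ball w (min e1 e2) \<subseteq> W"
    proof
      fix x assume "x \<in> ball w (min e1 e2)"
      then have xd: "dist x w < e1" "x \<in> \<Omega>" using e2 by (auto simp: dist_commute)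
      have "v i x s > 0" if s: "s > r" for s
      proof -
        have "v i w ((r + s) / 2) > 0" using w s unfolding W_def by auto
        then show ?thesis
          using spread[OF i _ wO e1(2)[OF xd(1)], of "(r + s) / 2" s] xd(2) closure_subset r s
          by (auto simp: field_simps)
      qed
      then show "x \<in> W" using xd unfolding W_def by auto
    qed
    then show "\<exists>e>0. ball w e \<subseteq> W" using e1 e2 by (intro exI[of _ "min e1 e2"]) auto
  qed
  have Vopen: "open (\<Omega> - closure W)" using \<Omega>_open by (simp add: open_Diff)
  have "W \<inter> \<Omega> = {} \<or> (\<Omega> - closure W) \<inter> \<Omega> = {}"
  proof (rule connectedD[OF \<Omega>_conn Wopen Vopen])
    show "W \<inter> (\<Omega> - closure W) \<inter> \<Omega> = {}" using closure_subset by blast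
    show "\<Omega> \<subseteq> W \<union> (\<Omega> - closure W)"
    proof
      fix w assume wO: "w \<in> \<Omega>"
      show "w \<in> W \<union> (\<Omega> - closure W)"
      proof (cases "w \<in> closure W")
        case True
        then have "\<forall>s>r. v i w s > 0" using clos wO closure_subset by blast
        then show ?thesis using wO unfolding W_def by auto
      qed (use wO in auto)
    qed
  qed
  moreover have "W \<inter> \<Omega> \<noteq> {}" using y'W y' by blast
  ultimately have "\<Omega> \<subseteq> closure W" by blast
  then have "closure \<Omega> \<subseteq> closure W" by (simp add: closure_minimal)
  then show ?thesis using clos[OF x] x t by blast
qed

end


context psys
begin

definition P where "P t = {i \<in> {1..m}. \<forall>x\<in>closure \<Omega>. v i x t > 0}"

lemma P_sub: "P t \<subseteq> {1..m}" by (auto simp: P_def)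

lemma P_mono: assumes st: "0 \<le> s" "s \<le> t" shows "P s \<subseteq> P t"
proof
  fix i assume "i \<in> P s"
  then have i: "i \<in> {1..m}" and h: "\<And>x. x \<in> closure \<Omega> \<Longrightarrow> v i x s > 0" by (auto simp: P_def)
  have "v i x t > 0" if "x \<in> closure \<Omega>" for x using persist[OF i that st h[OF that]] .
  then show "i \<in> P t" using i by (auto simp: P_def)
qed

lemma P_start: assumes "t > 0" shows "P t \<noteq> {}"
proof -
  obtain i0 x0 where i0: "i0 \<in> {1..m}" and x0: "x0 \<in> closure \<Omega>" and nz: "u0 i0 x0 \<noteq> 0"
    using u0_nz by blast
  have "v i0 x0 0 > 0" using nz u0_nonneg[OF i0 x0] v_init[OF i0 x0] by simp
  then have "i0 \<in> P t" unfolding P_def using fill[OF i0 x0 order.refl] assms i0 by blast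
  then show ?thesis by blast
qed

lemma l_per_nat: assumes i: "i \<in> {1..m}" and k: "k \<in> {1..m}" and x: "x \<in> closure \<Omega>"
  shows "l i k x (\<tau> + real n * T) = l i k x \<tau>"
proof (induction n)
  case (Suc n)
  have "l i k x (\<tau> + real (Suc n) * T) = l i k x ((\<tau> + real n * T) + T)"
    by (simp add: algebra_simps)
  also have "\<dots> = l i k x (\<tau> + real n * T)" by (rule l_per[OF i k x])
  finally show ?case using Suc by simp
qed simp

lemma l_per_int: assumes i: "i \<in> {1..m}" and k: "k \<in> {1..m}" and x: "x \<in> closure \<Omega>"
  shows "l i k x (\<tau> + real_of_int j * T) = l i k x \<tau>"
proof (cases "j \<ge> 0")
  case True
  then obtain n where "j = int n" using nonneg_eq_int by blast
  then show ?thesis using l_per_nat[OF i k x] by simp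
next
  case False
  define n where "n = nat (- j)"
  have n: "j = - int n" using False by (simp add: n_def)
  have "l i k x ((\<tau> - real n * T) + real n * T) = l i k x (\<tau> - real n * T)"
    by (rule l_per_nat[OF i k x])
  then show ?thesis using n by simp
qed

lemma irr_step:
  assumes t0: "t0 \<ge> 0" and ne: "P t0 \<noteq> {}" and nf: "{1..m} - P t0 \<noteq> {}" and t: "t > t0 + T"
  shows "\<exists>i\<in>{1..m} - P t0. i \<in> P t"
proof -
  have "\<exists>i\<in>{1..m} - P t0. \<exists>k\<in>P t0. avg_coeff \<Omega> T (l i k) \<noteq> 0"
  proof (rule ccontr)
    assume "\<not> ?thesis"
    then have "\<exists>I K. I \<noteq> {} \<and> K \<noteq> {} \<and> I \<inter> K = {} \<and> I \<union> K = {1..m} \<and>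
            (\<forall>i\<in>I. \<forall>k\<in>K. avg_coeff \<Omega> T (l i k) = 0)"
      using ne nf P_sub by (intro exI[of _ "{1..m} - P t0"] exI[of _ "P t0"]) blast
    then show False using L2 unfolding irreducible_mat_def by blast
  qed
  then obtain i k where i: "i \<in> {1..m}" "i \<notin> P t0" and k: "k \<in> P t0"
    and avg: "avg_coeff \<Omega> T (l i k) \<noteq> 0" by blast
  have k1: "k \<in> {1..m}" using k P_sub by blast
  have ik: "i \<noteq> k" using i k by blast
  obtain x \<tau> where x: "x \<in> \<Omega>" and \<tau>: "\<tau> \<in> {0..T}" and lnz: "l i k x \<tau> \<noteq> 0"
  proof (rule ccontr)
    assume "\<not> thesis"
    have z: "\<forall>p\<in>\<Omega> \<times> {0..T}. (\<lambda>(x, t). l i k x t) p = 0"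
    proof
      fix p assume p: "p \<in> \<Omega> \<times> {0..T}"
      show "(\<lambda>(x, t). l i k x t) p = 0"
      proof (rule ccontr)
        assume "(\<lambda>(x, t). l i k x t) p \<noteq> 0"
        then have "thesis" using that[of "fst p" "snd p"] p by (auto simp: split_beta)
        then show False using \<open>\<not> thesis\<close> by blast
      qed
    qed
    have "integral (\<Omega> \<times> {0..T}) (\<lambda>(x, t). l i k x t) = integral (\<Omega> \<times> {0..T}) (\<lambda>_. 0)"
      by (rule integral_cong) (use z in blast)
    then have "avg_coeff \<Omega> T (l i k) = 0" by (simp add: avg_coeff_def)
    then show False using avg by blast
  qed
  have xc: "x \<in> closure \<Omega>" using x closure_subset by blast
  have lpos: "l i k x \<tau> > 0" using L1[OF i(1) k1 ik xc, of \<tau>] lnz by simp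
  define j where "j = \<lfloor>(t0 - \<tau>) / T\<rfloor> + 1"
  define r where "r = \<tau> + real_of_int j * T"
  have f1: "real_of_int \<lfloor>(t0 - \<tau>) / T\<rfloor> \<le> (t0 - \<tau>) / T" by (rule of_int_floor_le)
  have f2: "(t0 - \<tau>) / T < real_of_int \<lfloor>(t0 - \<tau>) / T\<rfloor> + 1" by (rule real_of_int_floor_add_one_gt)
  have "real_of_int \<lfloor>(t0 - \<tau>) / T\<rfloor> * T \<le> (t0 - \<tau>) / T * T"
    by (rule mult_right_mono[OF f1]) (use T_pos in auto)
  then have "real_of_int \<lfloor>(t0 - \<tau>) / T\<rfloor> * T \<le> t0 - \<tau>" using T_pos by simp
  then have r1: "r \<le> t0 + T" by (simp add: r_def j_def algebra_simps)
  have "(t0 - \<tau>) / T * T < (real_of_int \<lfloor>(t0 - \<tau>) / T\<rfloor> + 1) * T"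
    by (rule mult_strict_right_mono[OF f2]) (use T_pos in auto)
  then have "t0 - \<tau> < (real_of_int \<lfloor>(t0 - \<tau>) / T\<rfloor> + 1) * T" using T_pos by simp
  then have r2: "t0 < r" by (simp add: r_def j_def algebra_simps)
  have lr: "l i k x r > 0" using lpos l_per_int[OF i(1) k1 xc] by (simp add: r_def)
  have vk: "v k x r > 0" using k xc persist[OF k1 xc t0, of r] r2 unfolding P_def by auto
  have vi: "v i x ((r + t) / 2) > 0"
    by (rule couple[OF i(1) k1 _ xc lr vk]) (use ik r2 t0 r1 t in auto)
  have "i \<in> P t" unfolding P_def
    using fill[OF i(1) xc _ vi] i(1) r2 t0 r1 t by (auto simp: field_simps)
  then show ?thesis using i by blast
qed

lemma count:
  "min (j + 1) m \<le> card (P (T / real m + real j * (T + T / real m)))"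
proof (induction j)
  case 0
  have pos: "T / real m > 0" using T_pos m_pos by simp
  have "P (T / real m) \<noteq> {}" using P_start[OF pos] .
  moreover have "finite (P (T / real m))" using P_sub finite_subset by blast
  ultimately have "card (P (T / real m)) \<ge> 1" by (simp add: Suc_leI card_gt_0_iff)
  then show ?case by simp
next
  case (Suc j)
  define s0 where "s0 = T / real m + real j * (T + T / real m)"
  define s1 where "s1 = T / real m + real (Suc j) * (T + T / real m)"
  have Tm: "T / real m > 0" using T_pos m_pos by simp
  have s0: "s0 > 0" unfolding s0_def using Tm T_pos by (simp add: add_pos_nonneg)
  have s01: "s1 = s0 + T + T / real m" unfolding s0_def s1_def by (simp add: distrib_right)
  have fin: "finite (P s1)" using P_sub finite_subset by blast
  have sub: "P s0 \<subseteq> P s1" using P_mono s0 s01 Tm T_pos by simp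
  have IH: "min (j + 1) m \<le> card (P s0)" using Suc unfolding s0_def .
  show ?case
  proof (cases "{1..m} - P s0 = {}")
    case True
    then have "P s1 = {1..m}" using sub P_sub by blast
    then show ?thesis unfolding s1_def by simp
  next
    case False
    obtain i where i: "i \<in> {1..m} - P s0" "i \<in> P s1"
      using irr_step[OF less_imp_le[OF s0] P_start[OF s0] False, of s1] s01 Tm by auto
    have "insert i (P s0) \<subseteq> P s1" using i sub by blast
    then have "card (insert i (P s0)) \<le> card (P s1)" using fin card_mono by blast
    moreover have "card (insert i (P s0)) = card (P s0) + 1"
      using i finite_subset[OF sub fin] by simp
    ultimately show ?thesis using IH unfolding s1_def by simp
  qed
qed

lemma final: assumes n: "n > m" shows "\<forall>i\<in>{1..m}. \<forall>x\<in>closure \<Omega>. v i x (real n * T) > 0"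
proof -
  have mm: "real (m - 1) = real m - 1" using m_pos by (simp add: of_nat_diff)
  have m0: "real m > 0" using m_pos by simp
  have eq: "T / real m + real (m - 1) * (T + T / real m) = real m * T"
    unfolding mm using m0 by (simp add: field_simps)
  have "min (m - 1 + 1) m \<le> card (P (real m * T))" using count[of "m - 1"] eq by simp
  then have "m \<le> card (P (real m * T))" using m_pos by simp
  then have "P (real m * T) = {1..m}"
    by (intro card_seteq[OF finite_atLeastAtMost P_sub]) simp
  moreover have "P (real m * T) \<subseteq> P (real n * T)"
    using P_mono T_pos n by (simp add: mult_right_mono)
  ultimately show ?thesis using P_sub unfolding P_def by blast
qed

end
theorem lemma2p5:
  fixes \<Omega> :: "(real^'n) set"
    and m :: nat and T :: real
    and d :: "nat \<Rightarrow> real"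
    and J :: "nat \<Rightarrow> real^'n \<Rightarrow> real^'n \<Rightarrow> real"
    and l :: "nat \<Rightarrow> nat \<Rightarrow> real^'n \<Rightarrow> real \<Rightarrow> real"
    and u0 :: "nat \<Rightarrow> real^'n \<Rightarrow> real"
    and v :: "nat \<Rightarrow> real^'n \<Rightarrow> real \<Rightarrow> real"
    and n :: nat
  assumes \<Omega>_open: "open \<Omega>" and \<Omega>_conn: "connected \<Omega>" and \<Omega>_ne: "\<Omega> \<noteq> {}"
    and \<Omega>_bdd: "bounded \<Omega>"
    and T_pos: "T > 0" and m_pos: "m \<ge> 1"
    and d_pos: "\<And>i. i \<in> {1..m} \<Longrightarrow> d i > 0"
    and J_cont: "\<And>i. i \<in> {1..m} \<Longrightarrow> continuous_on UNIV (\<lambda>(x, y). J i x y)"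
    and J_nonneg: "\<And>i x y. i \<in> {1..m} \<Longrightarrow> J i x y \<ge> 0"
    and J_diag: "\<And>i x. i \<in> {1..m} \<Longrightarrow> J i x x > 0"
    and J_int: "\<And>i x. i \<in> {1..m} \<Longrightarrow> (J i x has_integral 1) UNIV"
    and l_cont: "\<And>i k. i \<in> {1..m} \<Longrightarrow> k \<in> {1..m} \<Longrightarrow>
                   continuous_on (closure \<Omega> \<times> UNIV) (\<lambda>(x, t). l i k x t)"
    and l_per: "\<And>i k x t. i \<in> {1..m} \<Longrightarrow> k \<in> {1..m} \<Longrightarrow> x \<in> closure \<Omega> \<Longrightarrow>
                   l i k x (t + T) = l i k x t"
    and L1: "\<And>i k x t. i \<in> {1..m} \<Longrightarrow> k \<in> {1..m} \<Longrightarrow> i \<noteq> k \<Longrightarrow>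
                   x \<in> closure \<Omega> \<Longrightarrow> l i k x t \<ge> 0"
    and L2: "irreducible_mat m (\<lambda>i k. avg_coeff \<Omega> T (l i k))"
    and u0_cont: "\<And>i. i \<in> {1..m} \<Longrightarrow> continuous_on (closure \<Omega>) (u0 i)"
    and u0_nonneg: "\<And>i x. i \<in> {1..m} \<Longrightarrow> x \<in> closure \<Omega> \<Longrightarrow> u0 i x \<ge> 0"
    and u0_nz: "\<exists>i\<in>{1..m}. \<exists>x\<in>closure \<Omega>. u0 i x \<noteq> 0"
    and sol: "is_solution \<Omega> m d J l 0 u0 v"
    and n_gt: "n > m"
  shows "\<forall>i\<in>{1..m}. \<forall>x\<in>closure \<Omega>. v i x (real n * T) > 0"
  proof -
  interpret psys \<Omega> m T d J l u0 v
    by unfold_locales (use assms in auto)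
  show ?thesis using final[OF n_gt] .
qed

end
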